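(* There exist an argumentation framework $\mathcal F=(F,\rightarrowtail)$ and a set $A\subseteq F$ such that $A$ is not statically tenable, yet every finite subset of $A$ is strongly tenable.
   Context: An argumentation framework (AF) $\mathcal F=(F,\rightarrowtail)$ consists of a (possibly infinite) set $F$ of arguments and a binary attack relation $\rightarrowtail\subseteq F\times F$. An argument $a$ attacks a set $B$ if $a\rightarrowtail b$ for some $b\in B$. $A^+=\{x\in F:\exists a\in A,\ a\rightarrowtail x\}$. A set is conflict-free if none of its elements attacks one of its elements. For $A,B\subseteq F$, $A$ is as cogent as $B$, written $A\succeq B$, if $A$ is conflict-free and every $b\in B$ that attacks $A$ belongs to $A^+$. Static tenability: $A\subseteq F$ is statically tenable if for every finite conflict-free $B\subseteq F$ there is a conflict-free $C\supseteq A$ with $C\succeq B$. Strong tenability game: a strong tenability dispute on $\mathcal F$ is a finite sequence $(X_0,\dots,X_n)$ of subsets of $F$, where even-indexed sets are moves of the Proponent (Pro) and odd-indexed sets are moves of the Opponent (Opp), such that (1) each $X_i$ is conflict-free; (2) $X_i\subseteq X_{i+2}$ whenever both are defined; (3) $X_1$ and each $X_{i+2}\setminus X_i$ are finite; (4) every Pro move $X_{2k}$ with $k\ge 1$ satisfies $X_{2k}\succeq X_{2k-1}$; (5) every Opp move $X_{2k+1}$ satisfies $X_{2k}\not\succeq X_{2k+1}$ (some element of $X_{2k+1}$ attacks $X_{2k}$ and is not in $X_{2k}^+$). Play starts with $X_0=A$ and players alternately extend the sequence so that it remains a dispute. A dispute is concluded if it has no legal extension; a concluded dispute is won by the player who made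 its last move. A strategy for Pro assigns to each dispute ending with an Opp move a legal Pro reply; it is winning if every concluded dispute starting with $X_0=A$ in which Pro follows it is won by Pro (infinite plays count as wins for Pro). $A$ is strongly tenable if Pro has a winning strategy starting with $X_0=A$. *)

theory Defs
  imports Main
begin

definition is_AF :: "'a set \<Rightarrow> ('a \<Rightarrow> 'a \<Rightarrow> bool) \<Rightarrow> bool" where
  "is_AF F att \<longleftrightarrow> (\<forall>x y. att x y \<longrightarrow> x \<in> F \<and> y \<in> F)"

definition attacks_set :: "('a \<Rightarrow> 'a \<Rightarrow> bool) \<Rightarrow> 'a \<Rightarrow> 'a set \<Rightarrow> bool" where
  "attacks_set att a B \<longleftrightarrow> (\<exists>b\<in>B. att a b)"

definition plus_set :: "'a set \<Rightarrow> ('a \<Rightarrow> 'a \<Rightarrow> bool) \<Rightarrow> 'a set \<Rightarrow> 'a set" where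
  "plus_set F att A = {x \<in> F. \<exists>a\<in>A. att a x}"

definition conflict_free :: "('a \<Rightarrow> 'a \<Rightarrow> bool) \<Rightarrow> 'a set \<Rightarrow> bool" where
  "conflict_free att S \<longleftrightarrow> (\<forall>a\<in>S. \<forall>b\<in>S. \<not> att a b)"

definition cogent :: "'a set \<Rightarrow> ('a \<Rightarrow> 'a \<Rightarrow> bool) \<Rightarrow> 'a set \<Rightarrow> 'a set \<Rightarrow> bool" where
  "cogent F att A B \<longleftrightarrow> conflict_free att A \<and>
     (\<forall>b\<in>B. attacks_set att b A \<longrightarrow> b \<in> plus_set F att A)"

definition statically_tenable :: "'a set \<Rightarrow> ('a \<Rightarrow> 'a \<Rightarrow> bool) \<Rightarrow> 'a set \<Rightarrow> bool" where
  "statically_tenable F att A \<longleftrightarrow>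
     (\<forall>B. B \<subseteq> F \<and> finite B \<and> conflict_free att B \<longrightarrow>
        (\<exists>C. C \<subseteq> F \<and> A \<subseteq> C \<and> conflict_free att C \<and> cogent F att C B))"

text \<open>Strong tenability disputes: a finite nonempty list (X_0, ..., X_n) of
subsets of F; even indices are Pro moves, odd indices Opp moves.\<close>
definition st_dispute :: "'a set \<Rightarrow> ('a \<Rightarrow> 'a \<Rightarrow> bool) \<Rightarrow> 'a set list \<Rightarrow> bool" where
  "st_dispute F att xs \<longleftrightarrow>
     xs \<noteq> [] \<and>
     (\<forall>i < length xs. xs ! i \<subseteq> F \<and> conflict_free att (xs ! i)) \<and>
     (\<forall>i. i + 2 < length xs \<longrightarrow> xs ! i \<subseteq> xs ! (i + 2)) \<and>
     (1 < length xs \<longrightarrow> finite (xs ! 1)) \<and>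
     (\<forall>i. i + 2 < length xs \<longrightarrow> finite (xs ! (i + 2) - xs ! i)) \<and>
     (\<forall>k. 1 \<le> k \<and> 2 * k < length xs \<longrightarrow> cogent F att (xs ! (2 * k)) (xs ! (2 * k - 1))) \<and>
     (\<forall>k. 2 * k + 1 < length xs \<longrightarrow> \<not> cogent F att (xs ! (2 * k)) (xs ! (2 * k + 1)))"

definition follows_strategy :: "('a set list \<Rightarrow> 'a set) \<Rightarrow> 'a set list \<Rightarrow> bool" where
  "follows_strategy \<sigma> xs \<longleftrightarrow>
     (\<forall>k. 1 \<le> k \<and> 2 * k < length xs \<longrightarrow> xs ! (2 * k) = \<sigma> (take (2 * k) xs))"

text \<open>sigma is winning for Pro from A: whenever a dispute starting with A in
which Pro followed sigma ends with an Opp move, sigma's reply is legal. Hence no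
concluded dispute following sigma ends with an Opp move (i.e. is won by Opp);
concluded disputes ending with a Pro move and infinite plays are Pro wins.\<close>
definition winning_strategy :: "'a set \<Rightarrow> ('a \<Rightarrow> 'a \<Rightarrow> bool) \<Rightarrow> 'a set \<Rightarrow> ('a set list \<Rightarrow> 'a set) \<Rightarrow> bool" where
  "winning_strategy F att A \<sigma> \<longleftrightarrow>
     (\<forall>xs. st_dispute F att xs \<and> xs ! 0 = A \<and> even (length xs) \<and> follows_strategy \<sigma> xs
        \<longrightarrow> st_dispute F att (xs @ [\<sigma> xs]))"

definition strongly_tenable :: "'a set \<Rightarrow> ('a \<Rightarrow> 'a \<Rightarrow> bool) \<Rightarrow> 'a set \<Rightarrow> bool" where
  "strongly_tenable F att A \<longleftrightarrow>
     st_dispute F att [A] \<and> (\<exists>\<sigma>. winning_strategy F att A \<sigma>)"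

end

theory Submission
  imports Defs
begin

lemma oddpos[simp]: "odd (n::nat) \<Longrightarrow> 0 < n" by (cases n) auto

definition attE :: "nat \<Rightarrow> nat \<Rightarrow> bool" where
  "attE x y \<longleftrightarrow> (x = 0 \<and> odd y) \<or> (even x \<and> x > 0 \<and> y = 0) \<or>
     (even x \<and> x > 0 \<and> odd y \<and> x \<le> y + 1) \<or> (odd x \<and> even y \<and> y > 0 \<and> y \<le> x + 1)"

lemma P_props:
  assumes A': "A' \<subseteq> {y. odd y}" "finite A'"
  defines "P \<equiv> insert (2 * sum id A' + 4) A'"
  shows "conflict_free attE P" "cogent UNIV attE P X"
proof -
  have le: "y \<le> sum id A'" if "y \<in> A'" for y
    using member_le_sum[of y A' id] that A'(2) by simp
  show cf: "conflict_free attE P"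
    unfolding conflict_free_def
  proof (intro ballI)
    fix a b assume ab: "a \<in> P" "b \<in> P"
    have "a = 2 * sum id A' + 4 \<or> (odd a \<and> a \<le> sum id A')" using ab(1) A'(1) le unfolding P_def by auto
    moreover have "b = 2 * sum id A' + 4 \<or> (odd b \<and> b \<le> sum id A')" using ab(2) A'(1) le unfolding P_def by auto
    ultimately show "\<not> attE a b" unfolding attE_def by auto
  qed
  show "cogent UNIV attE P X"
    unfolding cogent_def plus_set_def attacks_set_def
  proof (intro conjI cf ballI impI)
    fix b assume "\<exists>p\<in>P. attE b p"
    then obtain p where p: "p \<in> P" "attE b p" by blast
    have "odd p \<or> p = 2 * sum id A' + 4" using p(1) A'(1) unfolding P_def by auto
    then show "b \<in> {x \<in> UNIV. \<exists>a\<in>P. attE a x}"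
    proof
      assume op: "odd p"
      show ?thesis
      proof (cases "b = 0")
        case True then show ?thesis unfolding P_def attE_def by auto
      next
        case False then have "attE p b" using p(2) op unfolding attE_def by auto
        then show ?thesis using p(1) by auto
      qed
    next
      assume "p = 2 * sum id A' + 4"
      then have "odd b \<and> p \<le> b + 1" using p(2) unfolding attE_def by auto
      then have "attE p b" using \<open>p = _\<close> unfolding attE_def by auto
      then show ?thesis using p(1) by auto
    qed
  qed
qed

theorem theorem8:
  shows "\<exists>(F :: nat set) (att :: nat \<Rightarrow> nat \<Rightarrow> bool) A.
           is_AF F att \<and> A \<subseteq> F \<and>
           \<not> statically_tenable F att A \<and>
           (\<forall>A'. A' \<subseteq> A \<and> finite A' \<longrightarrow> strongly_tenable F att A')"
proof (intro exI conjI allI impI)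
  show "is_AF UNIV attE" unfolding is_AF_def by simp
  show "{y::nat. odd y} \<subseteq> UNIV" by simp
  show "\<not> statically_tenable UNIV attE {y. odd y}"
  proof
    assume "statically_tenable UNIV attE {y. odd y}"
    moreover have "conflict_free attE {0}" unfolding conflict_free_def attE_def by simp
    ultimately obtain C where C: "{y. odd y} \<subseteq> C" "conflict_free attE C" "cogent UNIV attE C {0}"
      unfolding statically_tenable_def by blast
    have "attacks_set attE 0 C" unfolding attacks_set_def attE_def using C(1) by (metis mem_Collect_eq odd_one subsetD)
    then have "0 \<in> plus_set UNIV attE C" using C(3) unfolding cogent_def by auto
    then obtain c where c: "c \<in> C" "attE c 0" unfolding plus_set_def by auto
    then have "even c" "c > 0" unfolding attE_def by auto
    then have "attE c (c - 1)" "c - 1 \<in> C" using C(1) unfolding attE_def by auto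
    then show False using C(2) c(1) unfolding conflict_free_def by blast
  qed
  fix A' assume A': "A' \<subseteq> {y::nat. odd y} \<and> finite A'"
  define P where "P = insert (2 * sum id A' + 4) A'"
  have cfP: "conflict_free attE P" and cogP: "\<And>X. cogent UNIV attE P X"
    using P_props A' unfolding P_def by auto
  have cfA: "conflict_free attE A'" using A' unfolding conflict_free_def attE_def by auto
  show "strongly_tenable UNIV attE A'"
    unfolding strongly_tenable_def
  proof (intro conjI exI)
    show "st_dispute UNIV attE [A']" unfolding st_dispute_def using cfA by auto
    show "winning_strategy UNIV attE A' (\<lambda>_. P)"
      unfolding winning_strategy_def
    proof (intro allI impI)
      fix xs assume H: "st_dispute UNIV attE xs \<and> xs ! 0 = A' \<and> even (length xs) \<and>
                       follows_strategy (\<lambda>_. P) xs"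
      have ne: "xs \<noteq> []" using H unfolding st_dispute_def by auto
      show "st_dispute UNIV attE (xs @ [P])"
      proof (cases "length xs \<ge> 4")
        case True
        have fs: "\<forall>k. 1 \<le> k \<and> 2 * k < length xs \<longrightarrow> xs ! (2 * k) = P"
          using H unfolding follows_strategy_def by blast
        have "xs ! (2*1) = P" using fs[rule_format, of 1] True by simp
        moreover have nc: "\<forall>k. 2 * k + 1 < length xs \<longrightarrow> \<not> cogent UNIV attE (xs ! (2 * k)) (xs ! (2 * k + 1))"
          using H unfolding st_dispute_def by blast
        have "\<not> cogent UNIV attE (xs ! (2*1)) (xs ! (2*1+1))"
          using nc[rule_format, of 1] True by simp
        ultimately show ?thesis using cogP by simp
      next
        case False
        then have "length xs = 2" using H ne
        proof -
          have "length xs \<noteq> 0" using ne by simp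
          moreover have "length xs \<noteq> 1" "length xs \<noteq> 3" using H by auto
          ultimately show ?thesis using False by linarith
        qed
        then obtain X1 where xs: "xs = [A', X1]" using H
          by (cases xs; cases "tl xs"; auto)
        have d: "st_dispute UNIV attE [A', X1]" using H xs by simp
        then have f1: "finite X1" and cf1: "conflict_free attE X1"
          and nc: "\<not> cogent UNIV attE A' X1"
          unfolding st_dispute_def by (auto dest: spec[of _ 0] spec[of _ 1])
        have all3: "\<And>Q. (\<forall>i<length [A', X1, P]. Q i) \<longleftrightarrow> Q 0 \<and> Q 1 \<and> Q 2"
          by (auto simp: less_Suc_eq numeral_2_eq_2)
        have i0: "\<And>i. i + 2 < length [A', X1, P] \<longleftrightarrow> i = 0" by auto
        have k1: "\<And>k. (1 \<le> k \<and> 2 * k < length [A', X1, P]) \<longleftrightarrow> k = 1" by auto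
        have k0: "\<And>k. (2 * k + 1 < length [A', X1, P]) \<longleftrightarrow> k = 0" by auto
        have sub: "A' \<subseteq> P" unfolding P_def by auto
        have fin: "finite (P - A')" unfolding P_def by (rule finite_subset[of _ "{2 * sum id A' + 4}"]) auto
        have "st_dispute UNIV attE [A', X1, P]" unfolding st_dispute_def
          apply (simp only: all3 i0 k1 k0)
          using cfA cf1 cfP f1 cogP nc sub fin by simp
        then show ?thesis using xs by simp
      qed
    qed
  qed
qed

end
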